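(* Let $N\ge1$, $B\in\mathbb{R}$, and for $i=1,\dots,N$ let $D_i>0$, $b_i>0$, $a_i\in\mathbb{R}$. For $\lambda\in(0,\infty)$ define $$q_i(\lambda):=\frac{W\big(\exp(a_i+\frac{b_i}{\lambda}-1)\big)}{W\big(\exp(a_i+\frac{b_i}{\lambda}-1)\big)+1},$$ let $c_i(q):=-\dfrac{a_i}{b_i}-\dfrac{1}{b_i}\big[\ln(1-q)-\ln q\big]$ for $q\in(0,1)$, and define $$f(\lambda):=\sum_{i=1}^N D_i q_i(\lambda),\qquad g(\lambda):=\sum_{i=1}^N D_i q_i(\lambda)\,c_i(q_i(\lambda))-B.$$ Then $f$ and $g$ are strictly decreasing on $(0,\infty)$, and $\lim_{\lambda\to0^+}g(\lambda)>0$.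
   Context: $W$ denotes the Lambert $W$ function on $(0,\infty)$: the inverse of $x\mapsto xe^x$ on $(0,\infty)$. Note $q_i(\lambda)\in(0,1)$. Here $f$ is total sales and $g$ the exceeded budget as functions of the dual variable $\lambda$. *)

theory Defs
  imports "HOL-Analysis.Analysis"
begin

definition lambertW :: "real \<Rightarrow> real" where
  "lambertW y = (THE x. 0 < x \<and> x * exp x = y)"

definition qfun :: "real \<Rightarrow> real \<Rightarrow> real \<Rightarrow> real" where
  "qfun a b lam = lambertW (exp (a + b / lam - 1)) / (lambertW (exp (a + b / lam - 1)) + 1)"

definition cfun :: "real \<Rightarrow> real \<Rightarrow> real \<Rightarrow> real" where
  "cfun a b q = - a / b - (1 / b) * (ln (1 - q) - ln q)"

definition sales :: "nat \<Rightarrow> (nat \<Rightarrow> real) \<Rightarrow> (nat \<Rightarrow> real) \<Rightarrow> (nat \<Rightarrow> real) \<Rightarrow> real \<Rightarrow> real" where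
  "sales N D a b lam = (\<Sum>i=1..N. D i * qfun (a i) (b i) lam)"

definition exceeded_budget :: "nat \<Rightarrow> (nat \<Rightarrow> real) \<Rightarrow> (nat \<Rightarrow> real) \<Rightarrow> (nat \<Rightarrow> real) \<Rightarrow> real \<Rightarrow> real \<Rightarrow> real" where
  "exceeded_budget N D a b B lam =
     (\<Sum>i=1..N. D i * qfun (a i) (b i) lam * cfun (a i) (b i) (qfun (a i) (b i) lam)) - B"

end

theory Submission
  imports Defs "HOL-Real_Asymp.Real_Asymp"
begin

lemma LW_ex: fixes y :: real assumes "y > 0" shows "\<exists>!x. 0 < x \<and> x * exp x = y"
proof -
  have c: "continuous_on {0..y} (\<lambda>x. x * exp x)"
    by (intro continuous_intros)
  have "y \<le> y * exp y" using assms by simp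
  then obtain x where x: "0 \<le> x" "x \<le> y" "x * exp x = y"
    using IVT'[of "\<lambda>x. x * exp x" 0 y y] c assms by auto
  then have "x \<noteq> 0" using assms by auto
  with x have ex: "0 < x \<and> x * exp x = y" by auto
  have strict: "u * exp u < v * exp v" if "0 < u" "u < v" for u v :: real
    using that by (intro mult_strict_mono) auto
  show ?thesis
  proof (rule ex1I[of _ x])
    show "0 < x \<and> x * exp x = y" by fact
    fix z assume z: "0 < z \<and> z * exp z = y"
    show "z = x"
    proof (rule ccontr)
      assume "z \<noteq> x"
      then have "z < x \<or> x < z" by auto
      then show False using strict[of z x] strict[of x z] z ex by auto
    qed
  qed
qed

lemma LW: fixes y :: real assumes "y > 0" shows "lambertW y > 0 \<and> lambertW y * exp (lambertW y) = y"
  unfolding lambertW_def using theI'[OF LW_ex[OF assms]] .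

lemma LWt: "lambertW (exp t) > 0 \<and> lambertW (exp t) + ln (lambertW (exp t)) = t"
proof -
  define w where "w = lambertW (exp t)"
  have w: "w > 0" "w * exp w = exp t" using LW[of "exp t"] unfolding w_def by auto
  have "ln w + w = ln (w * exp w)" using w(1) by (subst ln_mult) auto
  also have "\<dots> = t" using w by simp
  finally have "ln w + w = t" .
  then show ?thesis using w unfolding w_def by simp
qed

lemma LW_mono: assumes "t1 < t2" shows "lambertW (exp t1) < lambertW (exp t2)"
proof (rule ccontr)
  assume "\<not> ?thesis"
  then have le: "lambertW (exp t2) \<le> lambertW (exp t1)" by simp
  have p: "lambertW (exp t2) > 0" using LWt by blast
  have "ln (lambertW (exp t2)) \<le> ln (lambertW (exp t1))" using le p by simp
  then show False using LWt[of t1] LWt[of t2] le assms by linarith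
qed

definition H :: "real \<Rightarrow> real \<Rightarrow> real" where "H a w = w * (ln w - a) / (w + 1)"

lemma H_mono: assumes "0 < u" "u < v" "u + ln u > a - 1" shows "H a u < H a v"
proof (rule DERIV_pos_imp_increasing[OF assms(2)])
  fix x assume x: "u \<le> x" "x \<le> v"
  have xp: "x > 0" using x assms by auto
  have "ln u \<le> ln x" using x assms by simp
  then have pos: "x + ln x - a + 1 > 0" using x assms by linarith
  have "DERIV (H a) x :> ((1 * (ln x - a) + x * (1 / x)) * (x + 1) - x * (ln x - a) * (1 + 0)) / ((x + 1) * (x + 1))"
    unfolding H_def using xp by (intro derivative_eq_intros refl) auto
  moreover have "((1 * (ln x - a) + x * (1 / x)) * (x + 1) - x * (ln x - a) * (1 + 0)) / ((x + 1) * (x + 1)) = (x + ln x - a + 1) / (x + 1)^2"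
    using xp by (simp add: power2_eq_square algebra_simps)
  ultimately have "DERIV (H a) x :> (x + ln x - a + 1) / (x + 1)^2" by simp
  then show "\<exists>y. DERIV (H a) x :> y \<and> y > 0" using pos xp by auto
qed


definition Wl :: "real \<Rightarrow> real \<Rightarrow> real \<Rightarrow> real" where
  "Wl a b lam = lambertW (exp (a + b / lam - 1))"

lemma Wl_pos: "Wl a b lam > 0" unfolding Wl_def using LWt by blast

lemma Wl_eq: "Wl a b lam + ln (Wl a b lam) = a + b / lam - 1" unfolding Wl_def using LWt by blast

lemma Wl_anti: assumes "0 < l1" "l1 < l2" "b > 0" shows "Wl a b l2 < Wl a b l1"
proof -
  have "b / l2 < b / l1" using assms by (intro divide_strict_left_mono) auto
  then show ?thesis unfolding Wl_def by (intro LW_mono) simp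
qed

lemma Wl_cond: assumes "lam > 0" "b > 0" shows "Wl a b lam + ln (Wl a b lam) > a - 1"
  using Wl_eq[of a b lam] assms by (simp add: divide_pos_pos)

lemma q_eq: "qfun a b lam = Wl a b lam / (Wl a b lam + 1)"
  unfolding qfun_def Wl_def by simp

lemma qc_eq: assumes "b > 0"
  shows "qfun a b lam * cfun a b (qfun a b lam) = H a (Wl a b lam) / b"
proof -
  define w where "w = Wl a b lam"
  have w: "w > 0" unfolding w_def by (rule Wl_pos)
  have e1: "1 - w / (w + 1) = 1 / (w + 1)" using w by (simp add: field_simps)
  have "ln (1 - w / (w + 1)) - ln (w / (w + 1)) = - ln (w + 1) - (ln w - ln (w + 1))"
    unfolding e1 using w by (simp add: ln_div)
  also have "\<dots> = - ln w" by simp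
  finally have l: "ln (1 - w / (w + 1)) - ln (w / (w + 1)) = - ln w" .
  have "qfun a b lam * cfun a b (qfun a b lam) = w / (w + 1) * (- a / b - (1 / b) * (- ln w))"
    unfolding q_eq cfun_def w_def[symmetric] l by simp
  also have "\<dots> = H a w / b" unfolding H_def using w assms by (simp add: field_simps)
  finally show ?thesis unfolding w_def .
qed

lemma Wl_lower: assumes "lam > 0" shows "(a + b / lam) / 2 \<le> Wl a b lam"
proof -
  have "ln (Wl a b lam) \<le> Wl a b lam - 1" using Wl_pos by (intro ln_le_minus_one)
  then have "a + b / lam \<le> 2 * Wl a b lam" using Wl_eq[of a b lam] by linarith
  then show ?thesis by simp
qed

lemma Wl_lim: assumes "b > 0" shows "filterlim (Wl a b) at_top (at_right 0)"
proof (rule filterlim_at_top_mono)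
  show "filterlim (\<lambda>lam. (a + b / lam) / 2) at_top (at_right 0)" using assms by real_asymp
  show "\<forall>\<^sub>F x in at_right 0. (a + b / x) / 2 \<le> Wl a b x"
    by (rule eventually_mono[OF eventually_at_right_less]) (rule Wl_lower)
qed

lemma H_lim: "filterlim (H a) at_top at_top"
  unfolding H_def by real_asymp

lemma sum_at_top:
  fixes f :: "nat \<Rightarrow> real \<Rightarrow> real"
  assumes "finite I" "I \<noteq> {}" "\<And>i. i \<in> I \<Longrightarrow> filterlim (f i) at_top F"
  shows "filterlim (\<lambda>x. \<Sum>i\<in>I. f i x) at_top F"
  using assms
proof (induction I rule: finite_ne_induct)
  case (singleton x) then show ?case by simp
next
  case (insert x F) then show ?case by (simp add: filterlim_at_top_add_at_top)
qed

theorem theorem4: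
  fixes N :: nat and B :: real and D a b :: "nat \<Rightarrow> real"
  assumes "N \<ge> 1"
    and "\<And>i. i \<in> {1..N} \<Longrightarrow> D i > 0"
    and "\<And>i. i \<in> {1..N} \<Longrightarrow> b i > 0"
  shows "strict_antimono_on {0<..} (sales N D a b) \<and>
         strict_antimono_on {0<..} (exceeded_budget N D a b B) \<and>
         (\<exists>L::ereal. L > 0 \<and>
           ((\<lambda>lam. ereal (exceeded_budget N D a b B lam)) \<longlongrightarrow> L) (at_right 0))"
proof -
  have ne: "{1..N} \<noteq> {}" using assms(1) by auto
  have eb: "exceeded_budget N D a b B lam = (\<Sum>i=1..N. D i * (H (a i) (Wl (a i) (b i) lam) / b i)) - B" for lam
    unfolding exceeded_budget_def
    by (intro arg_cong2[where f="(-)"] sum.cong refl) (simp add: mult.assoc qc_eq assms(3))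
  have s1: "strict_antimono_on {0<..} (sales N D a b)"
    unfolding monotone_on_def
  proof (intro ballI impI)
    fix x y :: real assume xy: "x \<in> {0<..}" "y \<in> {0<..}" "x < y"
    show "sales N D a b y < sales N D a b x"
      unfolding sales_def
    proof (rule sum_strict_mono[OF _ ne])
      fix i assume i: "i \<in> {1..N}"
      have w: "Wl (a i) (b i) y < Wl (a i) (b i) x" using Wl_anti xy assms(3)[OF i] by simp
      have "qfun (a i) (b i) y < qfun (a i) (b i) x"
        unfolding q_eq using w Wl_pos[of "a i" "b i" x] Wl_pos[of "a i" "b i" y]
        by (simp add: field_simps)
      then show "D i * qfun (a i) (b i) y < D i * qfun (a i) (b i) x"
        using assms(2)[OF i] by simp
    qed simp
  qed
  have s2: "strict_antimono_on {0<..} (exceeded_budget N D a b B)"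
    unfolding monotone_on_def eb
  proof (intro ballI impI diff_strict_right_mono)
    fix x y :: real assume xy: "x \<in> {0<..}" "y \<in> {0<..}" "x < y"
    show "(\<Sum>i=1..N. D i * (H (a i) (Wl (a i) (b i) y) / b i)) < (\<Sum>i=1..N. D i * (H (a i) (Wl (a i) (b i) x) / b i))"
    proof (rule sum_strict_mono[OF _ ne])
      fix i assume i: "i \<in> {1..N}"
      have w: "Wl (a i) (b i) y < Wl (a i) (b i) x" using Wl_anti xy assms(3)[OF i] by simp
      have "H (a i) (Wl (a i) (b i) y) < H (a i) (Wl (a i) (b i) x)"
        using H_mono[OF Wl_pos w Wl_cond] xy assms(3)[OF i] by simp
      then show "D i * (H (a i) (Wl (a i) (b i) y) / b i) < D i * (H (a i) (Wl (a i) (b i) x) / b i)"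
        using assms(2)[OF i] assms(3)[OF i] by (simp add: divide_strict_right_mono)
    qed simp
  qed
  have "filterlim (\<lambda>lam. \<Sum>i=1..N. D i * (H (a i) (Wl (a i) (b i) lam) / b i)) at_top (at_right 0)"
  proof (rule sum_at_top[OF _ ne])
    fix i assume i: "i \<in> {1..N}"
    have "filterlim (\<lambda>lam. H (a i) (Wl (a i) (b i) lam)) at_top (at_right 0)"
      using filterlim_compose[OF H_lim Wl_lim[OF assms(3)[OF i]]] .
    then have "filterlim (\<lambda>lam. (D i / b i) * H (a i) (Wl (a i) (b i) lam)) at_top (at_right 0)"
      using assms(2)[OF i] assms(3)[OF i]
      by (intro filterlim_tendsto_pos_mult_at_top[OF tendsto_const]) auto
    then show "filterlim (\<lambda>lam. D i * (H (a i) (Wl (a i) (b i) lam) / b i)) at_top (at_right 0)"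
      by (simp add: field_simps)
  qed simp
  then have "filterlim (\<lambda>lam. exceeded_budget N D a b B lam) at_top (at_right 0)"
    unfolding eb using filterlim_tendsto_add_at_top[OF tendsto_const[of "-B"]] by simp
  then have "((\<lambda>lam. ereal (exceeded_budget N D a b B lam)) \<longlongrightarrow> \<infinity>) (at_right 0)"
    by (simp add: tendsto_PInfty_eq_at_top)
  then show ?thesis using s1 s2 by (intro conjI exI[of _ "\<infinity>"]) auto
qed

end
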